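(* Fix $L\neq0$. Consider the system, in time $\tau$, $$\xi''=2\xi^3+2h\xi+\frac{L^2}{\xi^3},\qquad \eta''=-2\eta^3+2h\eta+\frac{L^2}{\eta^3},$$ for positive functions $\xi,\eta$ subject to the constraints $$\xi'^2=\xi^4+2h\xi^2+2(c+1)-\frac{L^2}{\xi^2},\qquad \eta'^2=-\eta^4+2h\eta^2-2(c-1)-\frac{L^2}{\eta^2}$$ for some real constants $h,c$. Then there exist $h,c\in\mathbb R$ and a periodic solution $(\xi(\tau),\eta(\tau))$ of this system if and only if $L^2\le\big(\frac{16}{27}\big)^{3/2}$.
   Context: This is the separated form of the spatial Stark problem $\ddot x=-x/|q|^3$, $\ddot y=-y/|q|^3$, $\ddot z=-z/|q|^3+1$ in parabolic coordinates $x=\xi\eta\cos\phi$, $y=\xi\eta\sin\phi$, $z=\frac12(\xi^2-\eta^2)$, with $dt=(\xi^2+\eta^2)d\tau$, where $h$ is the energy $\frac12|\dot q|^2-\frac1{|q|}-z$, $L=x\dot y-y\dot x$ the $z$-component of angular momentum, and $c$ the separation constant. Constant solutions count as periodic. *)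

theory Defs
  imports "HOL-Analysis.Analysis"
begin

text \<open>A solution, defined for all real times tau, of the separated spatial Stark system
  in parabolic coordinates, with energy h, separation constant c and angular momentum L.\<close>
definition stark_sep_solution ::
  "real \<Rightarrow> real \<Rightarrow> real \<Rightarrow> (real \<Rightarrow> real) \<Rightarrow> (real \<Rightarrow> real) \<Rightarrow> bool" where
  "stark_sep_solution L h c \<xi> \<eta> \<longleftrightarrow>
     (\<forall>\<tau>. \<xi> \<tau> > 0 \<and> \<eta> \<tau> > 0) \<and>
     (\<exists>\<xi>1 \<eta>1. \<forall>\<tau>.
        (\<xi> has_real_derivative \<xi>1 \<tau>) (at \<tau>) \<and>
        (\<eta> has_real_derivative \<eta>1 \<tau>) (at \<tau>) \<and>
        (\<xi>1 has_real_derivative (2 * \<xi> \<tau> ^ 3 + 2 * h * \<xi> \<tau> + L\<^sup>2 / \<xi> \<tau> ^ 3)) (at \<tau>) \<and>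
        (\<eta>1 has_real_derivative (- 2 * \<eta> \<tau> ^ 3 + 2 * h * \<eta> \<tau> + L\<^sup>2 / \<eta> \<tau> ^ 3)) (at \<tau>) \<and>
        (\<xi>1 \<tau>)\<^sup>2 = \<xi> \<tau> ^ 4 + 2 * h * (\<xi> \<tau>)\<^sup>2 + 2 * (c + 1) - L\<^sup>2 / (\<xi> \<tau>)\<^sup>2 \<and>
        (\<eta>1 \<tau>)\<^sup>2 = - (\<eta> \<tau> ^ 4) + 2 * h * (\<eta> \<tau>)\<^sup>2 - 2 * (c - 1) - L\<^sup>2 / (\<eta> \<tau>)\<^sup>2)"

text \<open>Periodicity of the pair (constant solutions are periodic).\<close>
definition pair_periodic :: "(real \<Rightarrow> real) \<Rightarrow> (real \<Rightarrow> real) \<Rightarrow> bool" where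
  "pair_periodic \<xi> \<eta> \<longleftrightarrow> (\<exists>T>0. \<forall>\<tau>. \<xi> (\<tau> + T) = \<xi> \<tau> \<and> \<eta> (\<tau> + T) = \<eta> \<tau>)"

end

theory Submission
  imports Defs
begin

lemma alg_if:
  fixes m u v L2 h c :: real
  assumes m: "0<m" "m<1" and u: "u = m * (1+m^2)" and v: "v = m * (1-m^2)"
    and L: "L2 = m * (1-m^4)^2" and h: "h = m - m^3 - (1+m^2)^2/(2 * m)"
    and c: "c = L2/(2 * u) - u^2/2 - h * u - 1"
  shows "2 * u + 2 * h + L2/u^2 = 0" "u^2 + 2 * h * u + 2 * (c+1) - L2/u = 0"
        "2 * h - 2 * v + L2/v^2 = 0" "2 * h * v - v^2 - 2 * (c-1) - L2/v = 0"
proof -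
  have "0 < 1 + m^2" by (simp add: add_pos_nonneg)
  then have up: "u > 0" using m u by simp
  have vp: "v > 0" using m v by (simp add: power2_eq_square mult_less_cancel_left1 ) (smt (verit) mult_less_cancel_left1 mult_pos_pos)
  show "2 * u + 2 * h + L2/u^2 = 0" using m up unfolding u L h by (simp add: field_simps) algebra
  show "u^2 + 2 * h * u + 2 * (c+1) - L2/u = 0" using up unfolding c by (simp add: field_simps)
  show "2 * h - 2 * v + L2/v^2 = 0" using m vp unfolding v L h by (simp add: field_simps) algebra
  have Lu: "L2/u = (1-m^2)^2 * (1+m^2)" using up m unfolding u L by (simp add: field_simps) algebra
  have Lv: "L2/v = (1+m^2)^2 * (1-m^2)" using vp m unfolding v L by (simp add: field_simps) algebra
  have hu: "h * u = (1+m^2) * (m^2 - m^4 - (1+m^2)^2/2)" using m unfolding h u by (simp add: field_simps) algebra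
  have hv: "h * v = (1-m^2) * (m^2 - m^4 - (1+m^2)^2/2)" using m unfolding h v by (simp add: field_simps) algebra
  have c': "c = L2/u/2 - u^2/2 - h * u - 1" unfolding c by simp
  have "2 * h * v - v^2 - 2 * (c-1) - L2/v = 2 * (h * v) - v^2 - 2 * (L2/u/2 - u^2/2 - h * u - 1 - 1) - L2/v"
    unfolding c' by simp
  also have "\<dots> = 2 * ((1-m^2) * (m^2 - m^4 - (1+m^2)^2/2)) - v^2 - 2 * ((1-m^2)^2 * (1+m^2)/2 - u^2/2 - (1+m^2) * (m^2 - m^4 - (1+m^2)^2/2) - 1 - 1) - (1+m^2)^2 * (1-m^2)"
    by (simp only: Lu Lv hu hv)
  also have "\<dots> = 0" unfolding u v by (simp add: field_simps power2_eq_square power4_eq_xxxx)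
  finally show "2 * h * v - v^2 - 2 * (c-1) - L2/v = 0" .
qed

lemma alg_onlyif1:
  fixes U v L2 h c :: real
  assumes U: "U > 0" and v: "v > 0"
   and A: "2 * U^3 + 2 * h * U^2 + L2 \<le> 0"
   and B: "U^3 + 2 * h * U^2 + 2 * (c+1) * U - L2 = 0"
   and C: "0 \<le> 2 * h * v^2 - v^3 - 2 * (c-1) * v - L2"
  shows "(U+v)^2 * (U^2 * v + L2) \<le> 4 * U^2 * v"
proof -
  have B': "2 * (c+1) * U * v = (L2 - U^3 - 2 * h * U^2) * v" using B by algebra
  have C': "2 * (c-1) * v * U \<le> (2 * h * v^2 - v^3 - L2) * U" using C U
    by (smt (verit) mult_right_mono mult_nonneg_nonneg)
  have E: "4 * U * v \<ge> L2 * (U+v) - U^3 * v + U * v^3 - 2 * h * U * v * (U+v)"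
    using B' C' by (simp add: algebra_simps power2_eq_square power3_eq_cube) 
  have A': "- 2 * h * U^2 * (v * (U+v)) \<ge> (2 * U^3 + L2) * (v * (U+v))"
    using A v U by (intro mult_right_mono) (auto simp: algebra_simps)
  have E': "4 * U^2 * v \<ge> L2 * (U+v) * U - U^4 * v + U^2 * v^3 - 2 * h * U^2 * v * (U+v)"
    using mult_right_mono[OF E, of U] U by (simp add: algebra_simps power2_eq_square power3_eq_cube power4_eq_xxxx)
  show ?thesis using E' A' by (simp add: algebra_simps power2_eq_square power3_eq_cube power4_eq_xxxx)
qed

lemma alg_onlyif2:
  fixes U v L2 :: real
  assumes U: "U > 0" and v: "v > 0" and H: "(U+v)^2 * (U^2 * v + L2) \<le> 4 * U^2 * v"
  shows "L2 \<le> (16/27) * sqrt (16/27)"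
proof -
  define s where "s = U+v"
  have s: "s > 0" using U v s_def by simp
  have amgm: "27 * (U^2 * v) \<le> 4 * s^3"
  proof -
    have "4 * s^3 - 27 * (U^2 * v) = (U - 2 * v)^2 * (4 * U + v)" unfolding s_def by (simp add: algebra_simps power2_eq_square power3_eq_cube)
    moreover have "(U - 2 * v)^2 * (4 * U + v) \<ge> 0" using U v by simp
    ultimately show ?thesis by linarith
  qed
  have H1: "L2 * s^2 \<le> U^2 * v * (4 - s^2)" using H unfolding s_def by (simp add: algebra_simps)
  have sq: "sqrt (16/27) = 4/3 * (1 / sqrt 3)"
    by (rule real_sqrt_unique) (auto simp: power_divide)
  show ?thesis
  proof (cases "4 - s^2 \<le> 0")
    case True
    have "U^2 * v * (4 - s^2) \<le> 0" using True U v by (simp add: mult_nonneg_nonpos)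
    then have "L2 \<le> 0" using H1 s by (smt (verit) mult_pos_pos zero_less_power)
    moreover have "0 \<le> (16/27) * sqrt (16/27::real)" by simp
    ultimately show ?thesis by linarith
  next
    case False
    have "U^2 * v * (4 - s^2) \<le> (4 * s^3/27) * (4 - s^2)" using amgm False by (intro mult_right_mono) auto
    with H1 have "L2 * s^2 \<le> (4 * s^3/27) * (4 - s^2)" by linarith
    moreover have "(4 * s^3/27) * (4 - s^2) = (4 * s * (4-s^2)/27) * s^2" by (simp add: power2_eq_square power3_eq_cube)
    ultimately have "L2 * s^2 \<le> (4 * s * (4-s^2)/27) * s^2" by linarith
    hence H2: "L2 \<le> 4 * s * (4-s^2)/27" using s by (simp add: mult_le_cancel_right)
    have "(4 * s * (4-s^2)/27)^2 \<le> ((16/27) * sqrt (16/27))^2"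
    proof -
      have t: "s^2 \<le> 16/3" using False by simp
      have "256 - 27 * s^2 * (4-s^2)^2 = (3 * s^2-4)^2 * (16-3 * s^2)" by (simp add: algebra_simps power2_eq_square)
      moreover have "(3 * s^2-4)^2 * (16-3 * s^2) \<ge> 0" using t by simp
      ultimately have "27 * s^2 * (4-s^2)^2 \<le> 256" by linarith
      thus ?thesis by (simp add: power_mult_distrib power_divide)
    qed
    hence "4 * s * (4-s^2)/27 \<le> (16/27) * sqrt (16/27)"
      by (rule power2_le_imp_le) simp
    with H2 show ?thesis by linarith
  qed
qed

lemma periodic_localmax:
  fixes f :: "real \<Rightarrow> real"
  assumes cont: "continuous_on UNIV f" and T: "T > 0" and per: "\<forall>t. f (t + T) = f t"
  shows "\<exists>t0. \<forall>y. \<bar>t0 - y\<bar> < T \<longrightarrow> f y \<le> f t0"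
proof -
  have cT: "continuous_on {0..T} f" using cont continuous_on_subset by blast
  obtain t0 where t0: "t0 \<in> {0..T}" "\<forall>y\<in>{0..T}. f y \<le> f t0"
    using continuous_attains_sup[OF compact_Icc _ cT] T by auto
  have "f y \<le> f t0" if y: "\<bar>t0 - y\<bar> < T" for y
  proof (cases "y < 0")
    case True
    then have "y + T \<in> {0..T}" using y t0 by auto
    then show ?thesis using t0 per by metis
  next
    case False
    show ?thesis
    proof (cases "y \<le> T")
      case True
      then show ?thesis using False t0 by auto
    next
      case False2: False
      then have "y - T \<in> {0..T}" using y t0 by auto
      moreover have "f y = f (y - T)" using per[rule_format, of "y - T"] by simp
      ultimately show ?thesis using t0 by auto
    qed
  qed
  then show ?thesis by blast
qed

lemma max_deriv:
  fixes f f1 f2 :: "real \<Rightarrow> real"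
  assumes d1: "\<forall>t. (f has_real_derivative f1 t) (at t)"
    and d2: "\<forall>t. (f1 has_real_derivative f2 t) (at t)"
    and d: "d > 0" and mx: "\<forall>y. \<bar>t0 - y\<bar> < d \<longrightarrow> f y \<le> f t0"
  shows "f1 t0 = 0 \<and> f2 t0 \<le> 0"
proof -
  have z: "f1 t0 = 0" using DERIV_local_max[OF d1[rule_format] d mx] .
  have "\<not> f2 t0 > 0"
  proof
    assume p: "f2 t0 > 0"
    obtain e where e: "e > 0" "\<forall>h>0. h < e \<longrightarrow> f1 t0 < f1 (t0 + h)"
      using DERIV_pos_inc_right[OF d2[rule_format] p] by blast
    define k where "k = min e d / 2"
    have k: "k > 0" "k < e" "k < d" using e d by (auto simp: k_def)
    obtain w where w: "w > t0" "w < t0 + k" "f (t0 + k) - f t0 = (t0 + k - t0) * f1 w"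
      using MVT2[of t0 "t0 + k" f f1] k d1 by auto
    have "f1 w > 0" using e(2)[rule_format, of "w - t0"] w k z by auto
    then have "(t0 + k - t0) * f1 w > 0" using k by simp
    then have "f (t0 + k) > f t0" using w by linarith
    moreover have "f (t0 + k) \<le> f t0" using mx k by auto
    ultimately show False by simp
  qed
  then show ?thesis using z by simp
qed

lemma K_eq: "(16/27::real) powr (3/2) = (16/27) * sqrt (16/27)"
proof -
  have "(16/27::real) powr (3/2) = (16/27) powr (1 + 1/2)" by simp
  also have "\<dots> = (16/27) powr 1 * (16/27) powr (1/2)" by (rule powr_add)
  also have "\<dots> = (16/27) * sqrt (16/27)" by (simp add: powr_half_sqrt)
  finally show ?thesis .
qed

lemma K_val: "(16/27) * sqrt (16/27::real) = (1 / sqrt 3) * (1 - (1 / sqrt 3)^4)^2"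
proof -
  have sq: "sqrt (16/27) = 4/3 * (1 / sqrt 3)"
    by (rule real_sqrt_unique) (auto simp: power_divide)
  have r4: "(1 / sqrt 3 :: real)^4 = 1/9"
    by (simp add: power_divide power4_eq_xxxx)
  show ?thesis unfolding sq r4 by (simp add: power2_eq_square)
qed

theorem lemma5p3:
  fixes L :: real
  assumes "L \<noteq> 0"
  shows "(\<exists>h c \<xi> \<eta>. stark_sep_solution L h c \<xi> \<eta> \<and> pair_periodic \<xi> \<eta>)
         \<longleftrightarrow> L\<^sup>2 \<le> (16 / 27) powr (3 / 2)"
proof
  assume "\<exists>h c \<xi> \<eta>. stark_sep_solution L h c \<xi> \<eta> \<and> pair_periodic \<xi> \<eta>"
  then obtain h c \<xi> \<eta> where S: "stark_sep_solution L h c \<xi> \<eta>" and P: "pair_periodic \<xi> \<eta>" by blast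
  from S obtain \<xi>1 \<eta>1 where pos: "\<forall>\<tau>. \<xi> \<tau> > 0 \<and> \<eta> \<tau> > 0" and D: "\<forall>\<tau>.
        (\<xi> has_real_derivative \<xi>1 \<tau>) (at \<tau>) \<and>
        (\<eta> has_real_derivative \<eta>1 \<tau>) (at \<tau>) \<and>
        (\<xi>1 has_real_derivative (2 * \<xi> \<tau> ^ 3 + 2 * h * \<xi> \<tau> + L\<^sup>2 / \<xi> \<tau> ^ 3)) (at \<tau>) \<and>
        (\<eta>1 has_real_derivative (- 2 * \<eta> \<tau> ^ 3 + 2 * h * \<eta> \<tau> + L\<^sup>2 / \<eta> \<tau> ^ 3)) (at \<tau>) \<and>
        (\<xi>1 \<tau>)\<^sup>2 = \<xi> \<tau> ^ 4 + 2 * h * (\<xi> \<tau>)\<^sup>2 + 2 * (c + 1) - L\<^sup>2 / (\<xi> \<tau>)\<^sup>2 \<and>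
        (\<eta>1 \<tau>)\<^sup>2 = - (\<eta> \<tau> ^ 4) + 2 * h * (\<eta> \<tau>)\<^sup>2 - 2 * (c - 1) - L\<^sup>2 / (\<eta> \<tau>)\<^sup>2"
    unfolding stark_sep_solution_def by blast
  from P obtain T where T: "T > 0" and per: "\<forall>\<tau>. \<xi> (\<tau> + T) = \<xi> \<tau>"
    unfolding pair_periodic_def by blast
  have d1: "\<forall>t. (\<xi> has_real_derivative \<xi>1 t) (at t)" using D by blast
  have d2: "\<forall>t. (\<xi>1 has_real_derivative (\<lambda>\<tau>. 2 * \<xi> \<tau> ^ 3 + 2 * h * \<xi> \<tau> + L\<^sup>2 / \<xi> \<tau> ^ 3) t) (at t)"
    using D by blast
  have cont: "continuous_on UNIV \<xi>"
    using d1 by (meson DERIV_isCont continuous_at_imp_continuous_on)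
  obtain t0 where mx: "\<forall>y. \<bar>t0 - y\<bar> < T \<longrightarrow> \<xi> y \<le> \<xi> t0"
    using periodic_localmax[OF cont T per] by blast
  from max_deriv[OF d1 d2 T mx]
  have z: "\<xi>1 t0 = 0" and f2: "2 * \<xi> t0 ^ 3 + 2 * h * \<xi> t0 + L\<^sup>2 / \<xi> t0 ^ 3 \<le> 0" by auto
  define x where "x = \<xi> t0"
  define y where "y = \<eta> t0"
  have x: "x > 0" and y: "y > 0" using pos x_def y_def by auto
  have P0: "0 = x ^ 4 + 2 * h * x\<^sup>2 + 2 * (c + 1) - L\<^sup>2 / x\<^sup>2"
  proof -
    have e: "(\<xi>1 t0)\<^sup>2 = \<xi> t0 ^ 4 + 2 * h * (\<xi> t0)\<^sup>2 + 2 * (c + 1) - L\<^sup>2 / (\<xi> t0)\<^sup>2" using D by blast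
    show ?thesis using e unfolding z x_def by simp
  qed
  have Q0: "0 \<le> - (y ^ 4) + 2 * h * y\<^sup>2 - 2 * (c - 1) - L\<^sup>2 / y\<^sup>2"
  proof -
    have e: "(\<eta>1 t0)\<^sup>2 = - (\<eta> t0 ^ 4) + 2 * h * (\<eta> t0)\<^sup>2 - 2 * (c - 1) - L\<^sup>2 / (\<eta> t0)\<^sup>2" using D by blast
    show ?thesis unfolding y_def e[symmetric] by simp
  qed
  have f2': "2 * x ^ 3 + 2 * h * x + L\<^sup>2 / x ^ 3 \<le> 0" using f2 x_def by simp
  define U where "U = x\<^sup>2"
  define v where "v = y\<^sup>2"
  have U: "U > 0" and v: "v > 0" using x y U_def v_def by auto
  have A: "2 * U^3 + 2 * h * U^2 + L\<^sup>2 \<le> 0"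
  proof -
    have "x^3 * (2 * x ^ 3 + 2 * h * x + L\<^sup>2 / x ^ 3) \<le> 0"
      using f2' x by (simp add: mult_nonneg_nonpos)
    moreover have "x^3 * (2 * x ^ 3 + 2 * h * x + L\<^sup>2 / x ^ 3) = 2 * U^3 + 2 * h * U^2 + L\<^sup>2"
      using x unfolding U_def by (simp add: field_simps power2_eq_square power3_eq_cube)
    ultimately show ?thesis by simp
  qed
  have B: "U^3 + 2 * h * U^2 + 2 * (c+1) * U - L\<^sup>2 = 0"
  proof -
    have "x^2 * (x ^ 4 + 2 * h * x\<^sup>2 + 2 * (c + 1) - L\<^sup>2 / x\<^sup>2) = U^3 + 2 * h * U^2 + 2 * (c+1) * U - L\<^sup>2"
      using x unfolding U_def by (simp add: field_simps power2_eq_square power3_eq_cube power4_eq_xxxx)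
    then show ?thesis using P0 by simp
  qed
  have C: "0 \<le> 2 * h * v^2 - v^3 - 2 * (c-1) * v - L\<^sup>2"
  proof -
    have "0 \<le> y^2 * (- (y ^ 4) + 2 * h * y\<^sup>2 - 2 * (c - 1) - L\<^sup>2 / y\<^sup>2)"
      using Q0 by simp
    moreover have "y^2 * (- (y ^ 4) + 2 * h * y\<^sup>2 - 2 * (c - 1) - L\<^sup>2 / y\<^sup>2) = 2 * h * v^2 - v^3 - 2 * (c-1) * v - L\<^sup>2"
      using y unfolding v_def by (simp add: field_simps power2_eq_square power3_eq_cube power4_eq_xxxx)
    ultimately show ?thesis by simp
  qed
  have "L\<^sup>2 \<le> (16/27) * sqrt (16/27)"
    using alg_onlyif2[OF U v alg_onlyif1[OF U v A B C]] .
  then show "L\<^sup>2 \<le> (16 / 27) powr (3 / 2)" using K_eq by simp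
next
  assume H: "L\<^sup>2 \<le> (16 / 27) powr (3 / 2)"
  define g where "g = (\<lambda>m::real. m * (1 - m^4)^2)"
  define r where "r = 1 / sqrt (3::real)"
  have r: "0 < r" "r < 1" unfolding r_def by auto
  have "g 0 \<le> L\<^sup>2" unfolding g_def by simp
  moreover have "L\<^sup>2 \<le> g r"
  proof -
    have "L\<^sup>2 \<le> (16/27) * sqrt (16/27)" using H K_eq by simp
    also have "\<dots> = g r" using K_val by (simp add: g_def r_def)
    finally show ?thesis .
  qed
  moreover have "\<forall>x. 0 \<le> x \<and> x \<le> r \<longrightarrow> isCont g x" unfolding g_def by (auto intro!: continuous_intros)
  ultimately obtain m where m0: "0 \<le> m" "m \<le> r" and gm: "g m = L\<^sup>2"
    using IVT[of g 0 "L\<^sup>2" r] r by auto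
  have Lp: "L\<^sup>2 > 0" using assms by simp
  have "m \<noteq> 0" using gm Lp unfolding g_def by auto
  then have m: "0 < m" "m < 1" using m0 r by auto
  define u where "u = m * (1+m^2)"
  define v where "v = m * (1-m^2)"
  define h where "h = m - m^3 - (1+m^2)^2/(2 * m)"
  define c where "c = L\<^sup>2/(2 * u) - u^2/2 - h * u - 1"
  have Ld: "L\<^sup>2 = m * (1-m^4)^2" using gm g_def by simp
  note E = alg_if[OF m u_def v_def Ld h_def c_def]
  have up: "u > 0" unfolding u_def using m by (simp add: add_pos_nonneg)
  have vp: "v > 0" unfolding v_def using m
    by (simp add: power2_eq_square) (smt (verit) mult_less_cancel_left1 mult_pos_pos)
  define a where "a = sqrt u"
  define b where "b = sqrt v"
  have a: "a > 0" "a^2 = u" using up a_def by auto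
  have b: "b > 0" "b^2 = v" using vp b_def by auto
  have ea: "2 * a ^ 3 + 2 * h * a + L\<^sup>2 / a ^ 3 = 0"
  proof -
    have "2 * a ^ 3 + 2 * h * a + L\<^sup>2 / a ^ 3 = a * (2 * u + 2 * h + L\<^sup>2/u^2)"
      using a by (auto simp: field_simps power2_eq_square power3_eq_cube)
    then show ?thesis using E(1) by simp
  qed
  have eb: "- 2 * b ^ 3 + 2 * h * b + L\<^sup>2 / b ^ 3 = 0"
  proof -
    have "- 2 * b ^ 3 + 2 * h * b + L\<^sup>2 / b ^ 3 = b * (2 * h - 2 * v + L\<^sup>2/v^2)"
      using b by (auto simp: field_simps power2_eq_square power3_eq_cube)
    then show ?thesis using E(3) by simp
  qed
  have ca: "(0::real)\<^sup>2 = a ^ 4 + 2 * h * a\<^sup>2 + 2 * (c + 1) - L\<^sup>2 / a\<^sup>2"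
  proof -
    have "a ^ 4 = (a^2)^2" by algebra
    then have "a ^ 4 = u^2" using a(2) by simp
    then show ?thesis using E(2) a by simp
  qed
  have cb: "(0::real)\<^sup>2 = - (b ^ 4) + 2 * h * b\<^sup>2 - 2 * (c - 1) - L\<^sup>2 / b\<^sup>2"
  proof -
    have "b ^ 4 = (b^2)^2" by algebra
    then have "b ^ 4 = v^2" using b(2) by simp
    then show ?thesis using E(4) b by (simp add: algebra_simps)
  qed
  have "stark_sep_solution L h c (\<lambda>_. a) (\<lambda>_. b)"
    unfolding stark_sep_solution_def
  proof (intro conjI)
    show "\<forall>\<tau>. 0 < a \<and> 0 < b" using a b by simp
    show "\<exists>\<xi>1 \<eta>1. \<forall>\<tau>.
        ((\<lambda>_. a) has_real_derivative \<xi>1 \<tau>) (at \<tau>) \<and>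
        ((\<lambda>_. b) has_real_derivative \<eta>1 \<tau>) (at \<tau>) \<and>
        (\<xi>1 has_real_derivative (2 * a ^ 3 + 2 * h * a + L\<^sup>2 / a ^ 3)) (at \<tau>) \<and>
        (\<eta>1 has_real_derivative (- 2 * b ^ 3 + 2 * h * b + L\<^sup>2 / b ^ 3)) (at \<tau>) \<and>
        (\<xi>1 \<tau>)\<^sup>2 = a ^ 4 + 2 * h * a\<^sup>2 + 2 * (c + 1) - L\<^sup>2 / a\<^sup>2 \<and>
        (\<eta>1 \<tau>)\<^sup>2 = - (b ^ 4) + 2 * h * b\<^sup>2 - 2 * (c - 1) - L\<^sup>2 / b\<^sup>2"
      by (rule exI[of _ "\<lambda>_. 0"], rule exI[of _ "\<lambda>_. 0"])
         (simp only: ea eb ca[symmetric] cb[symmetric] DERIV_const, simp)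
  qed
  moreover have "pair_periodic (\<lambda>_. a) (\<lambda>_. b)"
    unfolding pair_periodic_def by (rule exI[of _ 1]) simp
  ultimately show "\<exists>h c \<xi> \<eta>. stark_sep_solution L h c \<xi> \<eta> \<and> pair_periodic \<xi> \<eta>" by blast
qed

end
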